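(* Let $L>0$, $N\in\mathbb{N}_+$, $h=L/N$, $\epsilon>0$, $\theta_0>0$, $\tau>0$, $A\ge0$, $\alpha\in(0,1)$, $\rho_u>0$, $\rho_w>0$, and let $u^n,u^{n-1}\in\mathcal{C}_{per}$ with $-1<u^n<1$ and $-1<u^{n-1}<1$ pointwise. Let $u^{n+1}\in\mathcal{C}_{per}$ (with $-1<u^{n+1}<1$ pointwise) be the solution of the second-order convex splitting scheme, i.e. together with some $w^{n+1}\in\mathcal{C}_{per}$, $$3u^{n+1}-4u^n+u^{n-1}=2\tau\Delta_hw^{n+1},$$ $$w^{n+1}=\log(1+u^{n+1})-\log(1-u^{n+1})-\theta_0(2u^n-u^{n-1})-\epsilon^2\Delta_hu^{n+1}-A\tau\theta_0^2\Delta_h(u^{n+1}-u^n).$$ Let $\{u_2^{(k)}\}$ be the sequence generated by Algorithm 2 (described in the context). Then $\lim_{k\to\infty}\|u_2^{(k)}-u^{n+1}\|_2=0$.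
   Context: $\mathcal{C}_{per}$ is the space of real grid functions $\nu=(\nu_{i,j,k})_{i,j,k\in\mathbb{Z}}$ that are $N$-periodic in each index (values at cell centres of a uniform grid of mesh size $h$ on $(0,L)^3$). Inner product $\langle\nu,\xi\rangle=h^2\sum_{i,j,k=1}^N\nu_{i,j,k}\xi_{i,j,k}$, $\|\nu\|_2=\langle\nu,\nu\rangle^{1/2}$. Discrete Laplacian $(\Delta_h\nu)_{i,j,k}=h^{-2}(\nu_{i+1,j,k}+\nu_{i-1,j,k}+\nu_{i,j+1,k}+\nu_{i,j-1,k}+\nu_{i,j,k+1}+\nu_{i,j,k-1}-6\nu_{i,j,k})$. Operations and inequalities are pointwise. The solution $(u^{n+1},w^{n+1})$ of the scheme exists and is unique. Algorithm 2: set $u_2^{(0)}=u^n$, $w_2^{(0)}=0$, $u_3^{(0)}=0$, $w_3^{(0)}=0$. For $k=0,1,2,\dots$: (i) find $u_1^{(k+1)},w_1^{(k+1)}\in\mathcal{C}_{per}$ solving $(-\epsilon^2-A\tau\theta_0^2)\Delta_hu_1^{(k+1)}+A\tau\theta_0^2\Delta_hu^n-\alpha w_1^{(k+1)}+u_3^{(k)}+\rho_u(u_1^{(k+1)}-u_2^{(k)})=0$ and $\alpha(-u_1^{(k+1)}+\frac43u^n-\frac13u^{n-1})+\frac{2\tau}{3}\Delta_hw_1^{(k+1)}-w_3^{(k)}-\rho_w(w_1^{(k+1)}-w_2^{(k)})=0$; (ii) find $u_2^{(k+1)},w_2^{(k+1)}\in\mathcal{C}_{per}$ with $-1<u_2^{(k+1)}<1$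 solving $\log(1+u_2^{(k+1)})-\log(1-u_2^{(k+1)})-\theta_0(2u^n-u^{n-1})-(1-\alpha)w_2^{(k+1)}-u_3^{(k)}-\rho_u(u_1^{(k+1)}-u_2^{(k+1)})=0$ and $(1-\alpha)(-u_2^{(k+1)}+\frac43u^n-\frac13u^{n-1})+w_3^{(k)}+\rho_w(w_1^{(k+1)}-w_2^{(k+1)})=0$; (iii) set $u_3^{(k+1)}=u_3^{(k)}+\rho_u(u_1^{(k+1)}-u_2^{(k+1)})$, $w_3^{(k+1)}=w_3^{(k)}+\rho_w(w_1^{(k+1)}-w_2^{(k+1)})$. *)

theory Defs
  imports Complex_Main
begin

text \<open>Grid functions on cell centres, indexed by integer triples.\<close>
type_synonym grid = "int \<Rightarrow> int \<Rightarrow> int \<Rightarrow> real"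

definition per :: "nat \<Rightarrow> grid \<Rightarrow> bool" where
  "per N v \<longleftrightarrow> (\<forall>i j k. v (i + int N) j k = v i j k \<and> v i (j + int N) k = v i j k
                       \<and> v i j (k + int N) = v i j k)"

definition lap :: "real \<Rightarrow> grid \<Rightarrow> grid" where
  "lap h v = (\<lambda>i j k. (v (i+1) j k + v (i-1) j k + v i (j+1) k + v i (j-1) k
                        + v i j (k+1) + v i j (k-1) - 6 * v i j k) / h\<^sup>2)"

definition ip :: "real \<Rightarrow> nat \<Rightarrow> grid \<Rightarrow> grid \<Rightarrow> real" where
  "ip h N v x = h\<^sup>2 * (\<Sum>i\<in>{1..int N}. \<Sum>j\<in>{1..int N}. \<Sum>k\<in>{1..int N}. v i j k * x i j k)"

definition norm2 :: "real \<Rightarrow> nat \<Rightarrow> grid \<Rightarrow> real" where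
  "norm2 h N v = sqrt (ip h N v v)"

end

theory Submission
  imports Defs
begin

definition bsum :: "nat \<Rightarrow> grid \<Rightarrow> real" where
  "bsum N f = (\<Sum>i\<in>{1..int N}. \<Sum>j\<in>{1..int N}. \<Sum>k\<in>{1..int N}. f i j k)"

lemma bsum_mono: "(\<And>i j k. f i j k \<le> g i j k) \<Longrightarrow> bsum N f \<le> bsum N g"
  unfolding bsum_def by (intro sum_mono) auto

lemma bsum_nonneg: "(\<And>i j k. 0 \<le> f i j k) \<Longrightarrow> 0 \<le> bsum N f"
  unfolding bsum_def by (intro sum_nonneg) auto

lemma bsum_add: "bsum N (\<lambda>i j k. f i j k + g i j k) = bsum N f + bsum N g"
  unfolding bsum_def by (simp add: sum.distrib)

lemma bsum_diff: "bsum N (\<lambda>i j k. f i j k - g i j k) = bsum N f - bsum N g"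
  unfolding bsum_def by (simp add: sum_subtractf)

lemma bsum_cmult: "bsum N (\<lambda>i j k. c * f i j k) = c * bsum N f"
  unfolding bsum_def by (simp add: sum_distrib_left)

lemma tele: fixes f :: "int \<Rightarrow> real" shows "(\<Sum>i\<in>{1..int M}. f (i+1) - f i) = f (int M + 1) - f 1"
proof (induction M)
  case 0 then show ?case by simp
next
  case (Suc M)
  have e: "{1..int (Suc M)} = insert (int M + 1) {1..int M}" by auto
  show ?case unfolding e using Suc by simp
qed

lemma shift_sum:
  fixes f :: "int \<Rightarrow> real"
  assumes "\<And>i. f (i + int N) = f i"
  shows "(\<Sum>i\<in>{1..int N}. f (i+1)) = (\<Sum>i\<in>{1..int N}. f i)"
proof -
  have "(\<Sum>i\<in>{1..int N}. f (i+1)) - (\<Sum>i\<in>{1..int N}. f i) = (\<Sum>i\<in>{1..int N}. f (i+1) - f i)"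
    by (simp add: sum_subtractf)
  also have "\<dots> = 0" using tele[of f N] assms[of 1] by (simp add: add.commute)
  finally show ?thesis by simp
qed

lemma lap1:
  fixes f :: "int \<Rightarrow> real"
  assumes "\<And>i. f (i + int N) = f i"
  shows "(\<Sum>i\<in>{1..int N}. (f (i+1) + f (i-1) - 2 * f i) * f i) \<le> 0"
proof -
  define A where "A = (\<Sum>i\<in>{1..int N}. f (i+1) * f i)"
  define B where "B = (\<Sum>i\<in>{1..int N}. f (i-1) * f i)"
  define C where "C = (\<Sum>i\<in>{1..int N}. f i * f i)"
  define D where "D = (\<Sum>i\<in>{1..int N}. f (i+1) * f (i+1))"
  have s1: "A = B"
  proof -
    have "(\<Sum>i\<in>{1..int N}. f (i+1 - 1) * f (i+1)) = (\<Sum>i\<in>{1..int N}. f (i - 1) * f i)"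
      by (rule shift_sum[where f="\<lambda>i. f (i - 1) * f i"]) (metis assms add_diff_eq diff_add_eq)
    then show ?thesis unfolding A_def B_def by (simp add: mult.commute)
  qed
  have s2: "D = C" unfolding C_def D_def
    by (rule shift_sum[where f="\<lambda>i. f i * f i"]) (simp add: assms)
  have "(\<Sum>i\<in>{1..int N}. (f (i+1) + f (i-1) - 2 * f i) * f i)
      = (\<Sum>i\<in>{1..int N}. f (i+1) * f i + f (i-1) * f i - 2 * (f i * f i))"
    by (rule sum.cong) (auto simp: algebra_simps)
  also have "\<dots> = A + B - 2 * C" unfolding A_def B_def C_def
    by (simp only: sum.distrib sum_subtractf sum_distrib_left)
  also have "\<dots> = - (D - 2 * A + C)" unfolding s1 s2 by (simp add: algebra_simps)
  also have "D - 2 * A + C = (\<Sum>i\<in>{1..int N}. f (i+1) * f (i+1) - 2 * (f (i+1) * f i) + f i * f i)"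
    unfolding A_def C_def D_def by (simp only: sum.distrib sum_subtractf sum_distrib_left)
  also have "\<dots> = (\<Sum>i\<in>{1..int N}. (f (i+1) - f i)\<^sup>2)"
    by (rule sum.cong) (auto simp: algebra_simps power2_eq_square)
  finally have "(\<Sum>i\<in>{1..int N}. (f (i+1) + f (i-1) - 2 * f i) * f i) = - (\<Sum>i\<in>{1..int N}. (f (i+1) - f i)\<^sup>2)" .
  moreover have "0 \<le> (\<Sum>i\<in>{1..int N}. (f (i+1) - f i)\<^sup>2)" by (simp add: sum_nonneg)
  ultimately show ?thesis by linarith
qed

lemma lap3:
  assumes "per N v" and "h \<noteq> 0"
  shows "bsum N (\<lambda>i j k. lap h v i j k * v i j k) \<le> 0"
proof -
  let ?I = "{1..int N}"
  define X where "X i j k = (v (i+1) j k + v (i-1) j k - 2 * v i j k) * v i j k" for i j k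
  define Y where "Y i j k = (v i (j+1) k + v i (j-1) k - 2 * v i j k) * v i j k" for i j k
  define Z where "Z i j k = (v i j (k+1) + v i j (k-1) - 2 * v i j k) * v i j k" for i j k
  have p: "v (i + int N) j k = v i j k" "v i (j + int N) k = v i j k" "v i j (k + int N) = v i j k" for i j k
    using assms(1) unfolding per_def by auto
  have eq: "bsum N (\<lambda>i j k. lap h v i j k * v i j k) = (bsum N X + bsum N Y + bsum N Z) / h\<^sup>2"
  proof -
    have "bsum N (\<lambda>i j k. lap h v i j k * v i j k) = bsum N (\<lambda>i j k. (1/h\<^sup>2) * (X i j k + Y i j k + Z i j k))"
      unfolding lap_def X_def Y_def Z_def by (rule arg_cong[where f="bsum N"]) (auto simp: field_simps)
    also have "\<dots> = (1/h\<^sup>2) * bsum N (\<lambda>i j k. X i j k + Y i j k + Z i j k)" by (rule bsum_cmult)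
    also have "\<dots> = (1/h\<^sup>2) * (bsum N (\<lambda>i j k. X i j k + Y i j k) + bsum N Z)" by (simp only: bsum_add)
    also have "\<dots> = (1/h\<^sup>2) * (bsum N X + bsum N Y + bsum N Z)" by (simp only: bsum_add)
    finally show ?thesis by simp
  qed
  have "(\<Sum>k\<in>?I. Z i j k) \<le> 0" for i j
    using lap1[where f="\<lambda>k. v i j k" and N=N] unfolding Z_def by (simp add: p)
  then have "bsum N Z \<le> 0" unfolding bsum_def by (simp add: sum_nonpos)
  moreover have "bsum N Y \<le> 0"
  proof -
    have "bsum N Y = (\<Sum>i\<in>?I. \<Sum>k\<in>?I. \<Sum>j\<in>?I. Y i j k)" unfolding bsum_def
      by (rule sum.cong[OF refl], rule sum.swap)
    also have "\<dots> \<le> 0"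
    proof -
      have "(\<Sum>j\<in>?I. Y i j k) \<le> 0" for i k
        using lap1[where f="\<lambda>j. v i j k" and N=N] unfolding Y_def by (simp add: p)
      then show ?thesis by (simp add: sum_nonpos)
    qed
    finally show ?thesis .
  qed
  moreover have "bsum N X \<le> 0"
  proof -
    have "bsum N X = (\<Sum>j\<in>?I. \<Sum>i\<in>?I. \<Sum>k\<in>?I. X i j k)" unfolding bsum_def
      by (rule sum.swap)
    also have "\<dots> = (\<Sum>j\<in>?I. \<Sum>k\<in>?I. \<Sum>i\<in>?I. X i j k)"
      by (rule sum.cong[OF refl], rule sum.swap)
    also have "\<dots> \<le> 0"
    proof -
      have "(\<Sum>i\<in>?I. X i j k) \<le> 0" for j k
        using lap1[where f="\<lambda>i. v i j k" and N=N] unfolding X_def by (simp add: p)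
      then show ?thesis by (simp add: sum_nonpos)
    qed
    finally show ?thesis .
  qed
  ultimately have "bsum N X + bsum N Y + bsum N Z \<le> 0" by linarith
  moreover have "h\<^sup>2 > 0" using assms(2) by simp
  ultimately show ?thesis unfolding eq by (rule divide_nonpos_pos)
qed

lemma gmono:
  fixes x y :: real
  assumes "-1 < x" "x < 1" "-1 < y" "y < 1"
  shows "(x - y)\<^sup>2 \<le> ((ln (1+x) - ln (1-x)) - (ln (1+y) - ln (1-y))) * (x - y)"
proof -
  have key: "b - a \<le> (ln (1+b) - ln (1-b)) - (ln (1+a) - ln (1-a))"
    if "-1 < a" "a \<le> b" "b < 1" for a b :: real
  proof -
    have "ln ((1+a)/(1+b)) \<le> (1+a)/(1+b) - 1" by (rule ln_le_minus_one) (use that in auto)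
    moreover have "ln ((1+a)/(1+b)) = ln (1+a) - ln (1+b)" by (rule ln_divide_pos) (use that in auto)
    moreover have "(1+a)/(1+b) - 1 = - ((b-a)/(1+b))" using that by (simp add: field_simps)
    moreover have "(b-a)/2 \<le> (b-a)/(1+b)" using that by (intro divide_left_mono) auto
    ultimately have 1: "(b-a)/2 \<le> ln (1+b) - ln (1+a)" by linarith
    have "ln ((1-b)/(1-a)) \<le> (1-b)/(1-a) - 1" by (rule ln_le_minus_one) (use that in auto)
    moreover have "ln ((1-b)/(1-a)) = ln (1-b) - ln (1-a)" by (rule ln_divide_pos) (use that in auto)
    moreover have "(1-b)/(1-a) - 1 = - ((b-a)/(1-a))" using that by (simp add: field_simps)
    moreover have "(b-a)/2 \<le> (b-a)/(1-a)" using that by (intro divide_left_mono) auto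
    ultimately have 2: "(b-a)/2 \<le> ln (1-a) - ln (1-b)" by linarith
    have "(ln (1+b) - ln (1-b)) - (ln (1+a) - ln (1-a)) = (ln (1+b) - ln (1+a)) + (ln (1-a) - ln (1-b))" by simp
    moreover have "(b-a)/2 + (b-a)/2 \<le> (ln (1+b) - ln (1+a)) + (ln (1-a) - ln (1-b))" using add_mono[OF 1 2] .
    moreover have "(b-a)/2 + (b-a)/2 = b - a" by simp
    ultimately show ?thesis by simp
  qed
  show ?thesis
  proof (cases "y \<le> x")
    case True
    with key[of y x] assms have "x - y \<le> (ln (1+x) - ln (1-x)) - (ln (1+y) - ln (1-y))" by auto
    then show ?thesis using True by (simp add: power2_eq_square mult_right_mono)
  next
    case False
    with key[of x y] assms have "y - x \<le> (ln (1+y) - ln (1-y)) - (ln (1+x) - ln (1-x))" by auto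
    then have "(y - x) * (y - x) \<le> ((ln (1+y) - ln (1-y)) - (ln (1+x) - ln (1-x))) * (y - x)"
      using False by (intro mult_right_mono) auto
    then show ?thesis by (simp add: power2_eq_square algebra_simps)
  qed
qed

lemma lin: "(X::real) - Y = 2*(P - Q) + 2*R + T \<Longrightarrow> Q \<le> P \<Longrightarrow> 0 \<le> R \<Longrightarrow> 0 \<le> T \<Longrightarrow> Y \<le> X"
  by argo

lemma alg:
  fixes ru rw U3n U3o U3s U2n U2o Us W3n W3o W3s W2n W2o Ws U1n W1n :: real
  assumes "ru>0" "rw>0" "U3n = U3o + ru*(U1n - U2n)" "W3n = W3o + rw*(W1n - W2n)"
   "(U2n-Us)\<^sup>2 \<le> (U3n - U3s)*(U2n-Us) + (W3n - W3s)*(W2n - Ws)"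
   "0 \<le> (U3n-U3o)*(U2n-U2o) + (W3n-W3o)*(W2n-W2o)"
  shows "2*((-(U3n-U3s) - ru*(U2n-U2o))*(U1n-Us) + (-(W3n-W3s) - rw*(W2n-W2o))*(W1n-Ws)) + 2*(U2n-Us)\<^sup>2
     \<le> ((U3o-U3s)\<^sup>2/ru + ru*(U2o-Us)\<^sup>2 + (W3o-W3s)\<^sup>2/rw + rw*(W2o-Ws)\<^sup>2)
       - ((U3n-U3s)\<^sup>2/ru + ru*(U2n-Us)\<^sup>2 + (W3n-W3s)\<^sup>2/rw + rw*(W2n-Ws)\<^sup>2)"
proof -
  have u1: "U1n = U2n + (U3n - U3o)/ru" using assms(1,3) by (simp add: field_simps)
  have w1: "W1n = W2n + (W3n - W3o)/rw" using assms(2,4) by (simp add: field_simps)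
  have id: "((U3o-U3s)\<^sup>2/ru + ru*(U2o-Us)\<^sup>2 + (W3o-W3s)\<^sup>2/rw + rw*(W2o-Ws)\<^sup>2)
       - ((U3n-U3s)\<^sup>2/ru + ru*(U2n-Us)\<^sup>2 + (W3n-W3s)\<^sup>2/rw + rw*(W2n-Ws)\<^sup>2)
     - (2*((-(U3n-U3s) - ru*(U2n-U2o))*(U1n-Us) + (-(W3n-W3s) - rw*(W2n-W2o))*(W1n-Ws)) + 2*(U2n-Us)\<^sup>2)
     = 2*((U3n - U3s)*(U2n-Us) + (W3n - W3s)*(W2n - Ws) - (U2n-Us)\<^sup>2)
       + 2*((U3n-U3o)*(U2n-U2o) + (W3n-W3o)*(W2n-W2o))
       + ((U3n-U3o)\<^sup>2/ru + ru*(U2n-U2o)\<^sup>2 + (W3n-W3o)\<^sup>2/rw + rw*(W2n-W2o)\<^sup>2)"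
    unfolding u1 w1 using assms(1,2) by (simp add: field_simps power2_eq_square)
  have "0 \<le> (U3n-U3o)\<^sup>2/ru + ru*(U2n-U2o)\<^sup>2 + (W3n-W3o)\<^sup>2/rw + rw*(W2n-W2o)\<^sup>2"
    using assms(1,2) by (intro add_nonneg_nonneg) auto
  from lin[OF id assms(5,6) this] show ?thesis .
qed


lemma lap_diff: "lap h (\<lambda>i j k. f i j k - g i j k) i j k = lap h f i j k - lap h g i j k"
  unfolding lap_def by (simp add: diff_divide_distrib[symmetric])

lemma per_diff: "per N f \<Longrightarrow> per N g \<Longrightarrow> per N (\<lambda>i j k. f i j k - g i j k)"
  unfolding per_def by auto

lemma A2id:
  fixes U3 U3' G1 G2 T b W W' X3 X3' U U' a :: real
  assumes "U3 = G1 - T - b*W" "U3' = G2 - T - b*W'" "X3 = b*(U - a)" "X3' = b*(U' - a)"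
  shows "(U3' - U3)*(U' - U) + (X3' - X3)*(W' - W) = (G2 - G1)*(U' - U)"
  unfolding assms by (simp add: algebra_simps)

theorem theorem4p6:
  fixes L h \<epsilon> \<theta>0 \<tau> A \<alpha> \<rho>u \<rho>w :: real and N :: nat
    and un unm1 un1 wn1 :: grid
    and u1 w1 u2 w2 u3 w3 :: "nat \<Rightarrow> grid"
  assumes hL: "L > 0" and hN: "N > 0" and hh: "h = L / real N"
    and heps: "\<epsilon> > 0" and hth: "\<theta>0 > 0" and htau: "\<tau> > 0" and hA: "A \<ge> 0"
    and hal0: "0 < \<alpha>" and hal1: "\<alpha> < 1" and hru: "\<rho>u > 0" and hrw: "\<rho>w > 0"
    and pun: "per N un" and punm1: "per N unm1"
    and bun: "\<forall>i j k. -1 < un i j k \<and> un i j k < 1"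
    and bunm1: "\<forall>i j k. -1 < unm1 i j k \<and> unm1 i j k < 1"
    \<comment> \<open>the scheme solution\<close>
    and pun1: "per N un1" and pwn1: "per N wn1"
    and bun1: "\<forall>i j k. -1 < un1 i j k \<and> un1 i j k < 1"
    and sch1: "\<forall>i j k. 3 * un1 i j k - 4 * un i j k + unm1 i j k = 2 * \<tau> * lap h wn1 i j k"
    and sch2: "\<forall>i j k. wn1 i j k = ln (1 + un1 i j k) - ln (1 - un1 i j k)
                  - \<theta>0 * (2 * un i j k - unm1 i j k) - \<epsilon>\<^sup>2 * lap h un1 i j k
                  - A * \<tau> * \<theta>0\<^sup>2 * lap h (\<lambda>i j k. un1 i j k - un i j k) i j k"
    \<comment> \<open>Algorithm 2: initialisation\<close>
    and i0a: "u2 0 = un" and i0b: "w2 0 = (\<lambda>i j k. 0)"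
    and i0c: "u3 0 = (\<lambda>i j k. 0)" and i0d: "w3 0 = (\<lambda>i j k. 0)"
    \<comment> \<open>step (i)\<close>
    and pi1: "\<forall>m. per N (u1 (Suc m)) \<and> per N (w1 (Suc m))"
    and si_u: "\<forall>m i j k. (- \<epsilon>\<^sup>2 - A * \<tau> * \<theta>0\<^sup>2) * lap h (u1 (Suc m)) i j k
              + A * \<tau> * \<theta>0\<^sup>2 * lap h un i j k - \<alpha> * w1 (Suc m) i j k + u3 m i j k
              + \<rho>u * (u1 (Suc m) i j k - u2 m i j k) = 0"
    and si_w: "\<forall>m i j k. \<alpha> * (- u1 (Suc m) i j k + 4/3 * un i j k - 1/3 * unm1 i j k)
              + 2 * \<tau> / 3 * lap h (w1 (Suc m)) i j k - w3 m i j k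
              - \<rho>w * (w1 (Suc m) i j k - w2 m i j k) = 0"
    \<comment> \<open>step (ii)\<close>
    and pii: "\<forall>m. per N (u2 (Suc m)) \<and> per N (w2 (Suc m))"
    and bii: "\<forall>m i j k. -1 < u2 (Suc m) i j k \<and> u2 (Suc m) i j k < 1"
    and sii_u: "\<forall>m i j k. ln (1 + u2 (Suc m) i j k) - ln (1 - u2 (Suc m) i j k)
              - \<theta>0 * (2 * un i j k - unm1 i j k) - (1 - \<alpha>) * w2 (Suc m) i j k - u3 m i j k
              - \<rho>u * (u1 (Suc m) i j k - u2 (Suc m) i j k) = 0"
    and sii_w: "\<forall>m i j k. (1 - \<alpha>) * (- u2 (Suc m) i j k + 4/3 * un i j k - 1/3 * unm1 i j k)
              + w3 m i j k + \<rho>w * (w1 (Suc m) i j k - w2 (Suc m) i j k) = 0"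
    \<comment> \<open>step (iii)\<close>
    and siii_u: "\<forall>m i j k. u3 (Suc m) i j k = u3 m i j k + \<rho>u * (u1 (Suc m) i j k - u2 (Suc m) i j k)"
    and siii_w: "\<forall>m i j k. w3 (Suc m) i j k = w3 m i j k + \<rho>w * (w1 (Suc m) i j k - w2 (Suc m) i j k)"
  shows "(\<lambda>m. norm2 h N (\<lambda>i j k. u2 m i j k - un1 i j k)) \<longlonglongrightarrow> 0"
proof -
  define B where "B = A * \<tau> * \<theta>0\<^sup>2"
  have h0: "h \<noteq> 0" using hL hN hh by simp
  define g where "g = (\<lambda>x::real. ln (1+x) - ln (1-x))"
  define a where "a = (\<lambda>i j k. 4/3 * un i j k - 1/3 * unm1 i j k)"
  define c where "c = (\<lambda>i j k. 2 * un i j k - unm1 i j k)"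
  define u3s where "u3s = (\<lambda>i j k. g (un1 i j k) - \<theta>0 * c i j k - (1-\<alpha>) * wn1 i j k)"
  define w3s where "w3s = (\<lambda>i j k. (1-\<alpha>) * (un1 i j k - a i j k))"
  have hA2: "u3 (Suc p) i j k = g (u2 (Suc p) i j k) - \<theta>0 * c i j k - (1-\<alpha>) * w2 (Suc p) i j k
     \<and> w3 (Suc p) i j k = (1-\<alpha>) * (u2 (Suc p) i j k - a i j k)" for p i j k
  proof
    show "u3 (Suc p) i j k = g (u2 (Suc p) i j k) - \<theta>0 * c i j k - (1-\<alpha>) * w2 (Suc p) i j k"
      using sii_u[rule_format, of p i j k] siii_u[rule_format, of p i j k]
      unfolding g_def c_def by argo
    show "w3 (Suc p) i j k = (1-\<alpha>) * (u2 (Suc p) i j k - a i j k)"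
      using sii_w[rule_format, of p i j k] siii_w[rule_format, of p i j k]
      unfolding a_def by (simp add: algebra_simps; argo)
  qed
  have fp1: "-(\<epsilon>\<^sup>2 + B) * lap h un1 i j k + B * lap h un i j k - \<alpha> * wn1 i j k + u3s i j k = 0" for i j k
    using sch2[rule_format, of i j k] lap_diff[of h un1 un i j k]
    unfolding u3s_def g_def c_def B_def by (simp add: algebra_simps; argo)
  have fp2: "\<alpha> * (- un1 i j k + a i j k) + 2 * \<tau> / 3 * lap h wn1 i j k - w3s i j k = 0" for i j k
  proof -
    have "lap h wn1 i j k = (3 * un1 i j k - 4 * un i j k + unm1 i j k) / (2 * \<tau>)"
      using sch1[rule_format, of i j k] htau by (simp add: field_simps)
    then show ?thesis unfolding w3s_def a_def using htau by (simp add: field_simps; argo)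
  qed
  define vf where "vf = (\<lambda>m i j k. (u3 m i j k - u3s i j k)\<^sup>2/\<rho>u + \<rho>u*(u2 m i j k - un1 i j k)\<^sup>2
       + (w3 m i j k - w3s i j k)\<^sup>2/\<rho>w + \<rho>w*(w2 m i j k - wn1 i j k)\<^sup>2)"
  define V where "V = (\<lambda>m. bsum N (vf m))"
  define E where "E = (\<lambda>m. bsum N (\<lambda>i j k. (u2 m i j k - un1 i j k)\<^sup>2))"
  have Vnn: "0 \<le> V m" for m
    unfolding V_def vf_def using hru hrw by (intro bsum_nonneg add_nonneg_nonneg) auto
  have Enn: "0 \<le> E m" for m
    unfolding E_def by (intro bsum_nonneg) auto
  have key: "V (Suc (Suc n)) + 2 * E (Suc (Suc n)) \<le> V (Suc n)" for n
  proof -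
    define m where "m = Suc n"
    define E1u where "E1u = (\<lambda>i j k. u1 (Suc m) i j k - un1 i j k)"
    define E1w where "E1w = (\<lambda>i j k. w1 (Suc m) i j k - wn1 i j k)"
    define La where "La = (\<lambda>i j k. (-(u3 (Suc m) i j k - u3s i j k) - \<rho>u*(u2 (Suc m) i j k - u2 m i j k)) * E1u i j k
        + (-(w3 (Suc m) i j k - w3s i j k) - \<rho>w*(w2 (Suc m) i j k - w2 m i j k)) * E1w i j k)"
    have ha_u: "-(\<epsilon>\<^sup>2 + B) * lap h E1u i j k - \<alpha> * E1w i j k
        = -(u3 (Suc m) i j k - u3s i j k) - \<rho>u*(u2 (Suc m) i j k - u2 m i j k)" for i j k
      using si_u[rule_format, of m i j k] fp1[of i j k] siii_u[rule_format, of m i j k]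
        lap_diff[of h "u1 (Suc m)" un1 i j k]
      unfolding E1u_def E1w_def B_def by algebra
    have ha_w: "-\<alpha> * E1u i j k + 2 * \<tau> / 3 * lap h E1w i j k
        = (w3 (Suc m) i j k - w3s i j k) + \<rho>w*(w2 (Suc m) i j k - w2 m i j k)" for i j k
      using si_w[rule_format, of m i j k] fp2[of i j k] siii_w[rule_format, of m i j k]
        lap_diff[of h "w1 (Suc m)" wn1 i j k]
      unfolding E1u_def E1w_def a_def by algebra
    have L1: "bsum N (\<lambda>i j k. lap h E1u i j k * E1u i j k) \<le> 0"
      unfolding E1u_def by (rule lap3[OF per_diff h0]) (use pi1 pun1 in auto)
    have L2: "bsum N (\<lambda>i j k. lap h E1w i j k * E1w i j k) \<le> 0"
      unfolding E1w_def by (rule lap3[OF per_diff h0]) (use pi1 pwn1 in auto)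
    have La_eq: "La i j k = (-(\<epsilon>\<^sup>2 + B)) * (lap h E1u i j k * E1u i j k)
        + (-(2 * \<tau> / 3)) * (lap h E1w i j k * E1w i j k)" for i j k
    proof -
      have "La i j k = (-(\<epsilon>\<^sup>2 + B) * lap h E1u i j k - \<alpha> * E1w i j k) * E1u i j k
           + (\<alpha> * E1u i j k - 2 * \<tau> / 3 * lap h E1w i j k) * E1w i j k"
        using ha_u[of i j k] ha_w[of i j k] unfolding La_def by algebra
      then show ?thesis by (simp add: algebra_simps)
    qed
    have LaS: "0 \<le> bsum N La"
    proof -
      have "bsum N La = (-(\<epsilon>\<^sup>2 + B)) * bsum N (\<lambda>i j k. lap h E1u i j k * E1u i j k)
          + (-(2 * \<tau> / 3)) * bsum N (\<lambda>i j k. lap h E1w i j k * E1w i j k)"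
      proof -
        have "La = (\<lambda>i j k. (-(\<epsilon>\<^sup>2 + B)) * (lap h E1u i j k * E1u i j k)
          + (-(2 * \<tau> / 3)) * (lap h E1w i j k * E1w i j k))" by (intro ext) (rule La_eq)
        then show ?thesis by (simp only: bsum_add bsum_cmult)
      qed
      moreover have "0 \<le> B" unfolding B_def using hA htau by simp
      moreover have "0 \<le> (-(\<epsilon>\<^sup>2 + B)) * bsum N (\<lambda>i j k. lap h E1u i j k * E1u i j k)"
        by (rule mult_nonpos_nonpos) (use L1 \<open>0 \<le> B\<close> zero_le_power2[of \<epsilon>] in argo)+
      moreover have "0 \<le> (-(2 * \<tau> / 3)) * bsum N (\<lambda>i j k. lap h E1w i j k * E1w i j k)"
        by (rule mult_nonpos_nonpos) (use L2 htau in auto)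
      ultimately show ?thesis by argo
    qed
    have pw: "2 * La i j k + 2 * (u2 (Suc m) i j k - un1 i j k)\<^sup>2 \<le> vf m i j k - vf (Suc m) i j k" for i j k
    proof -
      have b1: "(u3 (Suc m) i j k - u3s i j k) * (u2 (Suc m) i j k - un1 i j k)
          + (w3 (Suc m) i j k - w3s i j k) * (w2 (Suc m) i j k - wn1 i j k)
          = (g (u2 (Suc m) i j k) - g (un1 i j k)) * (u2 (Suc m) i j k - un1 i j k)"
        by (rule A2id[where T="\<theta>0 * c i j k" and b="1-\<alpha>" and a="a i j k"])
           (use hA2[of m i j k] in \<open>auto simp: u3s_def w3s_def\<close>)
      have b2: "(u2 (Suc m) i j k - un1 i j k)\<^sup>2 \<le> (g (u2 (Suc m) i j k) - g (un1 i j k)) * (u2 (Suc m) i j k - un1 i j k)"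
        unfolding g_def by (rule gmono) (use bii bun1 in auto)
      have c1: "(u3 (Suc m) i j k - u3 m i j k) * (u2 (Suc m) i j k - u2 m i j k)
          + (w3 (Suc m) i j k - w3 m i j k) * (w2 (Suc m) i j k - w2 m i j k)
          = (g (u2 (Suc m) i j k) - g (u2 m i j k)) * (u2 (Suc m) i j k - u2 m i j k)"
        by (rule A2id[where T="\<theta>0 * c i j k" and b="1-\<alpha>" and a="a i j k"])
           (use hA2[of m i j k] hA2[of n i j k] in \<open>auto simp: m_def\<close>)
      have c2: "(u2 (Suc m) i j k - u2 m i j k)\<^sup>2 \<le> (g (u2 (Suc m) i j k) - g (u2 m i j k)) * (u2 (Suc m) i j k - u2 m i j k)"
        unfolding g_def m_def by (rule gmono) (use bii in auto)
      have c3: "0 \<le> (u2 (Suc m) i j k - u2 m i j k)\<^sup>2" by simp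
      have hb: "(u2 (Suc m) i j k - un1 i j k)\<^sup>2 \<le> (u3 (Suc m) i j k - u3s i j k) * (u2 (Suc m) i j k - un1 i j k)
          + (w3 (Suc m) i j k - w3s i j k) * (w2 (Suc m) i j k - wn1 i j k)"
        by (subst b1) (rule b2)
      have hc: "0 \<le> (u3 (Suc m) i j k - u3 m i j k) * (u2 (Suc m) i j k - u2 m i j k)
          + (w3 (Suc m) i j k - w3 m i j k) * (w2 (Suc m) i j k - w2 m i j k)"
        by (subst c1) (rule order_trans[OF c3 c2])
      show ?thesis unfolding La_def vf_def E1u_def E1w_def
        by (rule alg[OF hru hrw siii_u[rule_format] siii_w[rule_format] hb hc])
    qed
    have "bsum N (\<lambda>i j k. 2 * La i j k + 2 * (u2 (Suc m) i j k - un1 i j k)\<^sup>2)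
        \<le> bsum N (\<lambda>i j k. vf m i j k - vf (Suc m) i j k)"
      by (rule bsum_mono) (rule pw)
    then have "2 * bsum N La + 2 * E (Suc m) \<le> V m - V (Suc m)"
      unfolding E_def V_def by (simp only: bsum_add bsum_cmult bsum_diff)
    with LaS show ?thesis unfolding m_def by argo
  qed
  define W where "W = (\<lambda>n. V (Suc n))"
  have decW: "decseq W" unfolding W_def
  proof (rule decseq_SucI)
    fix n show "V (Suc (Suc n)) \<le> V (Suc n)" using key[of n] Enn[of "Suc (Suc n)"] by argo
  qed
  obtain Lm where WL: "W \<longlonglongrightarrow> Lm" "\<forall>i. Lm \<le> W i"
    using decseq_convergent[OF decW, of 0] Vnn unfolding W_def by blast
  have dW: "(\<lambda>n. (W n - W (Suc n)) / 2) \<longlonglongrightarrow> 0"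
  proof -
    have "(\<lambda>n. (W n - W (Suc n)) / 2) \<longlonglongrightarrow> (Lm - Lm) / 2"
      by (rule tendsto_divide[OF tendsto_diff[OF WL(1) LIMSEQ_Suc[OF WL(1)]] tendsto_const]) simp
    then show ?thesis by simp
  qed
  have "(\<lambda>n. E (Suc (Suc n))) \<longlonglongrightarrow> 0"
  proof (rule real_tendsto_sandwich[OF _ _ tendsto_const dW])
    show "\<forall>\<^sub>F n in sequentially. 0 \<le> E (Suc (Suc n))" using Enn by simp
    show "\<forall>\<^sub>F n in sequentially. E (Suc (Suc n)) \<le> (W n - W (Suc n)) / 2"
    proof (rule always_eventually, rule allI)
      fix n show "E (Suc (Suc n)) \<le> (W n - W (Suc n)) / 2" using key[of n] unfolding W_def by argo
    qed
  qed
  then have EL: "E \<longlonglongrightarrow> 0" by (rule LIMSEQ_imp_Suc[OF LIMSEQ_imp_Suc])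
  have "(\<lambda>m. sqrt (h\<^sup>2 * E m)) \<longlonglongrightarrow> sqrt (h\<^sup>2 * 0)"
    by (rule tendsto_real_sqrt[OF tendsto_mult[OF tendsto_const EL]])
  moreover have "norm2 h N (\<lambda>i j k. u2 m i j k - un1 i j k) = sqrt (h\<^sup>2 * E m)" for m
    unfolding norm2_def ip_def E_def bsum_def by (simp add: power2_eq_square)
  ultimately show ?thesis by simp
qed

end
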